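(* Fix any $\gamma\in[0,1]$ and any $x\in X$. For any distribution $P$ over $\Pi$ and any $\pi\in\Pi$, if $m=\lceil 6/(\gamma^2\mu_t)\rceil$, then \[\mathbb{E}_{\widetilde P\sim P^m}\Bigl|\frac1{(1-K\mu_t)W_{\widetilde P}(x,\pi(x))+\mu_t}-\frac1{(1-K\mu_t)W_P(x,\pi(x))+\mu_t}\Bigr|\le\frac{\gamma}{(1-K\mu_t)W_P(x,\pi(x))+\mu_t}.\] This implies that for all distributions $P$ over $\Pi$ and any $\pi\in\Pi$ there exists $\widetilde P\in\mathcal S_m$ such that for any $\lambda>0$, \[(V_{P,\pi,t}-V_{\widetilde P,\pi,t})+(1+\lambda)(\widehat V_{\widetilde P,\pi,t}-\widehat V_{P,\pi,t})\le\gamma\bigl(V_{P,\pi,t}+(1+\lambda)\widehat V_{P,\pi,t}\bigr).\]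
   Context: $A$ is a set of $K$ actions, $X$ a set of contexts, $\Pi$ a finite set of $N$ policies $\pi:X\to A$, $D_X$ a distribution on $X$, $\delta\in(0,1)$, and $x_1,\dots,x_{t-1}\in X$ a fixed sample. $C_t=2\log(Nt/\delta)$, $\mu_t=\min\{\frac1{2K},\sqrt{C_t/(2Kt)}\}$. For a distribution $P$ over $\Pi$, $W_P(x,a)=\sum_{\pi:\pi(x)=a}P(\pi)$; $V_{P,\pi,t}=\mathbb{E}_{x\sim D_X}[1/((1-K\mu_t)W_P(x,\pi(x))+\mu_t)]$ and $\widehat V_{P,\pi,t}=\frac1{t-1}\sum_{i=1}^{t-1}1/((1-K\mu_t)W_P(x_i,\pi(x_i))+\mu_t)$. $\mathcal S_m$ is the set of distributions of the form $\frac1m\sum_{i=1}^m\mathbb{I}(\pi=\pi_i)$ with $\pi_i\in\Pi$; $\widetilde P\sim P^m$ means $\widetilde P=\frac1m\sum_{i=1}^m\mathbb{I}(\cdot=\pi_i)$ with $\pi_1,\dots,\pi_m$ drawn i.i.d. from $P$. *)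

theory Defs
  imports "HOL-Probability.Probability"
begin

text \<open>Distributions over the finite policy set Pol are weight functions
  on policies (values outside Pol are ignored).\<close>
definition is_dist :: "('x \<Rightarrow> 'a) set \<Rightarrow> (('x \<Rightarrow> 'a) \<Rightarrow> real) \<Rightarrow> bool" where
  "is_dist Pol P \<longleftrightarrow> (\<forall>\<pi>\<in>Pol. 0 \<le> P \<pi>) \<and> sum P Pol = 1"

definition C_t :: "nat \<Rightarrow> real \<Rightarrow> nat \<Rightarrow> real" where
  "C_t N \<delta> t = 2 * ln (real N * real t / \<delta>)"

definition mu_t :: "nat \<Rightarrow> nat \<Rightarrow> real \<Rightarrow> nat \<Rightarrow> real" where
  "mu_t K N \<delta> t = min (1 / (2 * real K)) (sqrt (C_t N \<delta> t / (2 * real K * real t)))"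

definition W :: "('x \<Rightarrow> 'a) set \<Rightarrow> (('x \<Rightarrow> 'a) \<Rightarrow> real) \<Rightarrow> 'x \<Rightarrow> 'a \<Rightarrow> real" where
  "W Pol P x a = (\<Sum>\<pi>\<in>{\<pi>\<in>Pol. \<pi> x = a}. P \<pi>)"

definition inv_prob :: "('x \<Rightarrow> 'a) set \<Rightarrow> nat \<Rightarrow> real \<Rightarrow> (('x \<Rightarrow> 'a) \<Rightarrow> real) \<Rightarrow> ('x \<Rightarrow> 'a) \<Rightarrow> 'x \<Rightarrow> real" where
  "inv_prob Pol K \<mu> P \<pi> x = 1 / ((1 - real K * \<mu>) * W Pol P x (\<pi> x) + \<mu>)"

definition V :: "'x measure \<Rightarrow> ('x \<Rightarrow> 'a) set \<Rightarrow> nat \<Rightarrow> real \<Rightarrow> (('x \<Rightarrow> 'a) \<Rightarrow> real) \<Rightarrow> ('x \<Rightarrow> 'a) \<Rightarrow> real" where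
  "V D Pol K \<mu> P \<pi> = (\<integral>x. inv_prob Pol K \<mu> P \<pi> x \<partial>D)"

definition Vhat :: "(nat \<Rightarrow> 'x) \<Rightarrow> nat \<Rightarrow> ('x \<Rightarrow> 'a) set \<Rightarrow> nat \<Rightarrow> real \<Rightarrow> (('x \<Rightarrow> 'a) \<Rightarrow> real) \<Rightarrow> ('x \<Rightarrow> 'a) \<Rightarrow> real" where
  "Vhat xs t Pol K \<mu> P \<pi> = (1 / real (t - 1)) * (\<Sum>i\<in>{1..<t}. inv_prob Pol K \<mu> P \<pi> (xs i))"

definition emp :: "nat \<Rightarrow> (nat \<Rightarrow> ('x \<Rightarrow> 'a)) \<Rightarrow> ('x \<Rightarrow> 'a) \<Rightarrow> real" where
  "emp m f = (\<lambda>\<pi>. real (card {i\<in>{..<m}. f i = \<pi>}) / real m)"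

definition S :: "('x \<Rightarrow> 'a) set \<Rightarrow> nat \<Rightarrow> (('x \<Rightarrow> 'a) \<Rightarrow> real) set" where
  "S Pol m = {emp m f | f. f \<in> {..<m} \<rightarrow>\<^sub>E Pol}"

text \<open>Expectation over Ptilde ~ P^m of g(Ptilde): pi_1..pi_m iid from P\<close>
definition E_Pm :: "('x \<Rightarrow> 'a) set \<Rightarrow> (('x \<Rightarrow> 'a) \<Rightarrow> real) \<Rightarrow> nat \<Rightarrow> ((('x \<Rightarrow> 'a) \<Rightarrow> real) \<Rightarrow> real) \<Rightarrow> real" where
  "E_Pm Pol P m g = (\<Sum>f\<in>{..<m} \<rightarrow>\<^sub>E Pol. (\<Prod>i<m. P (f i)) * g (emp m f))"

end

theory Submission
  imports Defs
begin

lemma Epm_prod: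
  fixes g :: "nat \<Rightarrow> 'b \<Rightarrow> real"
  assumes "finite A"
  shows "(\<Sum>f\<in>{..<m} \<rightarrow>\<^sub>E A. \<Prod>i<m. g i (f i)) = (\<Prod>i<m. \<Sum>y\<in>A. g i y)"
  using prod_sum_PiE[of "{..<m}" "\<lambda>_. A" g] assms by simp

lemma prod_delta_nat:
  fixes b :: "nat \<Rightarrow> real"
  assumes "i < m"
  shows "(\<Prod>k<m. if k = i then b k else 1) = b i"
  using prod.delta[of "{..<m}" i b] assms by simp

lemma Epm_pair:
  fixes P h h' :: "'b \<Rightarrow> real" and i j m :: nat
  assumes "finite A" "sum P A = 1" "i < m" "j < m"
  shows "(\<Sum>f\<in>{..<m} \<rightarrow>\<^sub>E A. (\<Prod>k<m. P (f k)) * (h (f i) * h' (f j)))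
     = (if i = j then (\<Sum>y\<in>A. P y * (h y * h' y)) else (\<Sum>y\<in>A. P y * h y) * (\<Sum>y\<in>A. P y * h' y))"
proof -
  define G where "G k y = P y * (if k = i then h y else 1) * (if k = j then h' y else 1)" for k y
  have 1: "(\<Prod>k<m. P (f k)) * (h (f i) * h' (f j)) = (\<Prod>k<m. G k (f k))" for f
  proof -
    have "(\<Prod>k<m. G k (f k)) = (\<Prod>k<m. P (f k)) * (\<Prod>k<m. (if k = i then h (f k) else 1)) * (\<Prod>k<m. (if k = j then h' (f k) else 1))"
      unfolding G_def prod.distrib by simp
    also have "\<dots> = (\<Prod>k<m. P (f k)) * (h (f i) * h' (f j))"
      using assms prod_delta_nat[of i m "\<lambda>k. h (f k)"] prod_delta_nat[of j m "\<lambda>k. h' (f k)"] by simp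
    finally show ?thesis by simp
  qed
  have "(\<Sum>f\<in>{..<m} \<rightarrow>\<^sub>E A. (\<Prod>k<m. P (f k)) * (h (f i) * h' (f j))) = (\<Prod>k<m. \<Sum>y\<in>A. G k y)"
    unfolding 1 by (rule Epm_prod[OF assms(1)])
  also have "\<dots> = (if i = j then (\<Sum>y\<in>A. P y * (h y * h' y)) else (\<Sum>y\<in>A. P y * h y) * (\<Sum>y\<in>A. P y * h' y))"
  proof (cases "i = j")
    case True
    have "(\<Prod>k<m. \<Sum>y\<in>A. G k y) = (\<Prod>k<m. if k = i then (\<Sum>y\<in>A. P y * (h y * h' y)) else 1)"
      by (rule prod.cong) (auto simp: G_def True assms(2) mult.assoc)
    then show ?thesis using True assms(3,4) by simp
  next
    case False
    have "(\<Prod>k<m. \<Sum>y\<in>A. G k y) = (\<Prod>k<m. (if k = i then (\<Sum>y\<in>A. P y * h y) else 1) * (if k = j then (\<Sum>y\<in>A. P y * h' y) else 1))"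
      by (rule prod.cong) (use False in \<open>auto simp: G_def assms(2)\<close>)
    then show ?thesis using False prod_delta_nat[OF assms(3)] prod_delta_nat[OF assms(4)]
      by (simp add: prod.distrib)
  qed
  finally show ?thesis .
qed

lemma Epm_var:
  fixes P Y :: "'b \<Rightarrow> real" and m :: nat
  assumes "finite A" "sum P A = 1" "m > 0" "\<And>y. Y y * Y y = Y y"
  defines "w \<equiv> (\<Sum>y\<in>A. P y * Y y)"
  shows "(\<Sum>f\<in>{..<m} \<rightarrow>\<^sub>E A. (\<Prod>k<m. P (f k)) * ((\<Sum>i<m. Y (f i)) / m - w)\<^sup>2) = (w - w\<^sup>2) / m"
proof -
  define Z where "Z y = Y y - w" for y
  have sq: "((\<Sum>i<m. Y (f i)) / m - w)\<^sup>2 = (\<Sum>i<m. \<Sum>j<m. Z (f i) * Z (f j)) / (real m)\<^sup>2" for f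
  proof -
    have "(\<Sum>i<m. Y (f i)) / m - w = (\<Sum>i<m. Z (f i)) / m"
      using assms(3) by (simp add: Z_def sum_subtractf field_simps)
    then show ?thesis by (simp add: power2_eq_square sum_product power_divide)
  qed
  have sZ: "(\<Sum>y\<in>A. P y * Z y) = 0"
    by (simp add: Z_def right_diff_distrib sum_subtractf w_def flip: sum_distrib_right) (simp add: assms(2))
  have v: "(\<Sum>y\<in>A. P y * (Z y * Z y)) = w - w\<^sup>2"
  proof -
    have "(\<Sum>y\<in>A. P y * (Z y * Z y)) = (\<Sum>y\<in>A. P y * Y y - 2 * w * (P y * Y y) + w\<^sup>2 * P y)"
      by (rule sum.cong) (auto simp: Z_def algebra_simps power2_eq_square assms(4))
    also have "\<dots> = w - 2 * w * w + w\<^sup>2"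
      by (simp add: sum.distrib sum_subtractf w_def flip: sum_distrib_left) (simp add: assms(2))
    finally show ?thesis by (simp add: power2_eq_square)
  qed
  have "(\<Sum>f\<in>{..<m} \<rightarrow>\<^sub>E A. (\<Prod>k<m. P (f k)) * ((\<Sum>i<m. Y (f i)) / m - w)\<^sup>2)
      = (\<Sum>i<m. \<Sum>j<m. \<Sum>f\<in>{..<m} \<rightarrow>\<^sub>E A. (\<Prod>k<m. P (f k)) * (Z (f i) * Z (f j))) / (real m)\<^sup>2"
    unfolding sq by (simp add: sum_divide_distrib sum_distrib_left sum.swap[of _ "{..<m} \<rightarrow>\<^sub>E A"] mult.assoc)
  also have "\<dots> = (\<Sum>i<m. \<Sum>j<m. if i = j then w - w\<^sup>2 else 0) / (real m)\<^sup>2"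
    by (intro arg_cong[where f="\<lambda>x. x / _"] sum.cong refl) (simp add: Epm_pair[OF assms(1,2)] sZ v)
  also have "\<dots> = (w - w\<^sup>2) / m"
    using assms(3) by (simp add: power2_eq_square)
  finally show ?thesis .
qed

lemma pw_step1:
  fixes c \<mu> w v :: real
  assumes "c > 0" "\<mu> > 0" "w \<ge> 0" "v \<ge> 0"
  defines "a \<equiv> c * w + \<mu>" and "b \<equiv> c * v + \<mu>"
  shows "\<bar>1/b - 1/a\<bar> \<le> c * \<bar>v - w\<bar> / a\<^sup>2 + c\<^sup>2 * (v - w)\<^sup>2 / (a\<^sup>2 * \<mu>)"
proof -
  have a: "a \<ge> \<mu>" and b: "b \<ge> \<mu>" using assms by (auto simp: a_def b_def)
  have ap: "a > 0" "b > 0" using a b assms(2) by auto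
  have eq0: "1/b - 1/a = (a - b) / (a * b)"
    using ap by (simp add: field_simps)
  have eq: "1/b - 1/a = c * (w - v) / (a * b)"
    unfolding eq0 by (simp add: a_def b_def algebra_simps)
  show ?thesis
  proof (cases "v \<ge> w")
    case True
    then have "b \<ge> a" using assms by (simp add: a_def b_def mult_left_mono)
    have "\<bar>1/b - 1/a\<bar> = c * \<bar>v - w\<bar> / (a * b)" using eq ap assms(1) by (simp add: abs_mult abs_minus_commute)
    also have "\<dots> \<le> c * \<bar>v - w\<bar> / (a * a)"
      using \<open>b \<ge> a\<close> ap assms(1) by (intro divide_left_mono mult_left_mono) auto
    also have "\<dots> \<le> c * \<bar>v - w\<bar> / a\<^sup>2 + c\<^sup>2 * (v - w)\<^sup>2 / (a\<^sup>2 * \<mu>)"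
      using assms by (simp add: power2_eq_square)
    finally show ?thesis .
  next
    case False
    have ab: "a - b = c * (w - v)" by (simp add: a_def b_def algebra_simps)
    have "\<bar>1/b - 1/a\<bar> = c * (w - v) / (a * b)" using eq ap assms(1) False by simp
    also have "\<dots> = c * (w - v) / a\<^sup>2 + c * (w - v) * (a - b) / (a\<^sup>2 * b)"
      using ap by (simp add: field_simps power2_eq_square)
    also have "\<dots> = c * (w - v) / a\<^sup>2 + c\<^sup>2 * (v - w)\<^sup>2 / (a\<^sup>2 * b)"
      by (simp add: ab power2_eq_square algebra_simps)
    also have "\<dots> \<le> c * (w - v) / a\<^sup>2 + c\<^sup>2 * (v - w)\<^sup>2 / (a\<^sup>2 * \<mu>)"
      using ap b assms(2) by (intro add_left_mono divide_left_mono mult_left_mono) auto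
    finally show ?thesis using False by simp
  qed
qed

lemma pw_bound:
  fixes c \<mu> w v \<gamma> :: real
  assumes "c > 0" "\<mu> > 0" "w \<ge> 0" "v \<ge> 0" "\<gamma> > 0"
  defines "a \<equiv> c * w + \<mu>" and "b \<equiv> c * v + \<mu>"
  shows "\<bar>1/b - 1/a\<bar> \<le> \<gamma> / (4 * a) + (c\<^sup>2 / (\<gamma> * a^3) + c\<^sup>2 / (a\<^sup>2 * \<mu>)) * (v - w)\<^sup>2"
proof -
  have ap: "a > 0" using assms by (simp add: a_def add_nonneg_pos)
  define u where "u = c * \<bar>v - w\<bar> / a"
  have "u \<le> \<gamma>/4 + u\<^sup>2 / \<gamma>"
  proof -
    have "0 \<le> (u - \<gamma>/2)\<^sup>2" by simp
    then have "0 \<le> u\<^sup>2 - \<gamma> * u + \<gamma>\<^sup>2/4" by (simp add: power2_eq_square algebra_simps)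
    moreover have "\<gamma> * (\<gamma>/4 + u\<^sup>2 / \<gamma>) = \<gamma>\<^sup>2/4 + u\<^sup>2" using assms(5) by (simp add: distrib_left power2_eq_square)
    ultimately have "\<gamma> * u \<le> \<gamma> * (\<gamma>/4 + u\<^sup>2 / \<gamma>)" by (simp add: algebra_simps)
    then show ?thesis using assms(5) by simp
  qed
  then have "u / a \<le> (\<gamma>/4 + u\<^sup>2 / \<gamma>) / a" using ap by (simp add: divide_right_mono)
  also have "u / a = c * \<bar>v - w\<bar> / a\<^sup>2" by (simp add: u_def power2_eq_square)
  also have "(\<gamma>/4 + u\<^sup>2 / \<gamma>) / a = \<gamma> / (4 * a) + c\<^sup>2 / (\<gamma> * a^3) * (v - w)\<^sup>2"
    using ap assms(5) by (simp add: u_def field_simps power2_eq_square power3_eq_cube)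
  finally have 1: "c * \<bar>v - w\<bar> / a\<^sup>2 \<le> \<gamma> / (4 * a) + c\<^sup>2 / (\<gamma> * a^3) * (v - w)\<^sup>2" .
  show ?thesis using pw_step1[OF assms(1-4)] 1 unfolding a_def b_def by (simp add: algebra_simps)
qed

lemma W_emp:
  assumes "f \<in> {..<m} \<rightarrow>\<^sub>E Pol" "finite Pol"
  shows "W Pol (emp m f) x a = (\<Sum>i<m. if f i x = a then 1 else 0) / real m"
proof -
  have c: "real (card {i \<in> {..<m}. f i = \<pi>}) = (\<Sum>i<m. if f i = \<pi> then 1 else 0)" for \<pi>
    by (simp add: sum.inter_filter[symmetric])
  have "W Pol (emp m f) x a = (\<Sum>\<pi>\<in>{\<pi> \<in> Pol. \<pi> x = a}. \<Sum>i<m. if f i = \<pi> then 1 else 0) / real m"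
    unfolding W_def emp_def c by (simp add: sum_divide_distrib)
  also have "(\<Sum>\<pi>\<in>{\<pi> \<in> Pol. \<pi> x = a}. \<Sum>i<m. if f i = \<pi> then 1 else (0::real)) = (\<Sum>i<m. \<Sum>\<pi>\<in>{\<pi> \<in> Pol. \<pi> x = a}. if f i = \<pi> then 1 else 0)"
    by (rule sum.swap)
  also have "\<dots> = (\<Sum>i<m. if f i x = a then 1 else 0)"
    using assms by (intro sum.cong refl) (auto simp: sum.delta PiE_def Pi_def)
  finally show ?thesis .
qed

lemma W_sum: "finite Pol \<Longrightarrow> W Pol P x a = (\<Sum>y\<in>Pol. P y * (if y x = a then 1 else 0))"
  unfolding W_def by (auto simp: sum.inter_filter intro!: sum.cong)

lemma dist_W: assumes "is_dist Pol P" "finite Pol" shows "0 \<le> W Pol P x a" "W Pol P x a \<le> 1"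
proof -
  show "0 \<le> W Pol P x a" using assms unfolding W_def is_dist_def by (auto intro: sum_nonneg)
  have "W Pol P x a \<le> sum P Pol" unfolding W_def
    using assms unfolding is_dist_def by (intro sum_mono2) auto
  then show "W Pol P x a \<le> 1" using assms unfolding is_dist_def by simp
qed

lemma arith_final:
  fixes c \<mu> w \<gamma> a mm :: real
  assumes "c > 0" "c \<le> 1" "\<mu> > 0" "w \<ge> 0" "\<gamma> > 0" "\<gamma> \<le> 1" "mm > 0" "mm \<ge> 6 / (\<gamma>\<^sup>2 * \<mu>)"
    and a: "a = c * w + \<mu>"
  shows "\<gamma> / (4 * a) + (c\<^sup>2 / (\<gamma> * a^3) + c\<^sup>2 / (a\<^sup>2 * \<mu>)) * ((w - w\<^sup>2) / mm) \<le> \<gamma> / 2 * (1 / a)"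
proof -
  have ap: "a > 0" using assms by (simp add: add_nonneg_pos)
  have im: "1 / mm \<le> \<gamma>\<^sup>2 * \<mu> / 6"
  proof -
    have p: "6 / (\<gamma>\<^sup>2 * \<mu>) > 0" using assms by simp
    have "0 < mm * (6 / (\<gamma>\<^sup>2 * \<mu>))" using p assms(7) by (rule mult_pos_pos[rotated])
    then have "1 / mm \<le> 1 / (6 / (\<gamma>\<^sup>2 * \<mu>))" using assms(8) by (intro divide_left_mono) auto
    then show ?thesis by simp
  qed
  have C0: "c\<^sup>2 / (\<gamma> * a^3) + c\<^sup>2 / (a\<^sup>2 * \<mu>) \<ge> 0" using ap assms by simp
  have "(w - w\<^sup>2) / mm \<le> w / mm" using assms by (simp add: divide_right_mono)
  also have "w / mm \<le> w * (\<gamma>\<^sup>2 * \<mu> / 6)" using mult_left_mono[OF im assms(4)] by simp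
  finally have 1: "(w - w\<^sup>2) / mm \<le> w * (\<gamma>\<^sup>2 * \<mu> / 6)" .
  have cw: "c * w \<le> w" using assms by (simp add: mult_left_le_one_le)
  have i: "c\<^sup>2 / (\<gamma> * a^3) * (w * (\<gamma>\<^sup>2 * \<mu> / 6)) \<le> \<gamma> / (24 * a)"
  proof -
    have sq: "a\<^sup>2 - 4 * (c * w) * \<mu> = (c * w - \<mu>)\<^sup>2" by (simp add: a power2_eq_square algebra_simps)
    have "4 * (c * w) * \<mu> \<le> a\<^sup>2" using sq zero_le_power2[of "c * w - \<mu>"] by linarith
    moreover have "c * (c * w) * \<mu> \<le> c * w * \<mu>" using assms cw
      by (simp add: mult_left_le_one_le mult_nonneg_nonneg)
    ultimately have r: "4 * (c\<^sup>2 * w * \<mu>) / a\<^sup>2 \<le> 1" using ap by (simp add: power2_eq_square algebra_simps)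
    have "c\<^sup>2 / (\<gamma> * a^3) * (w * (\<gamma>\<^sup>2 * \<mu> / 6)) = (\<gamma> / (24 * a)) * (4 * (c\<^sup>2 * w * \<mu>) / a\<^sup>2)"
      using ap assms(5) by (simp add: divide_simps power2_eq_square power3_eq_cube)
    also have "\<dots> \<le> (\<gamma> / (24 * a)) * 1" using r ap assms(5) by (intro mult_left_mono) auto
    finally show ?thesis by simp
  qed
  have ii: "c\<^sup>2 / (a\<^sup>2 * \<mu>) * (w * (\<gamma>\<^sup>2 * \<mu> / 6)) \<le> \<gamma> / (6 * a)"
  proof -
    have "c * (c * w) * \<gamma> \<le> c * (c * w)" using assms cw
      using mult_right_le_one_le[of "c * (c * w)" \<gamma>] by (simp add: mult_nonneg_nonneg)
    also have "\<dots> \<le> c * w" using assms cw by (simp add: mult_left_le_one_le mult_nonneg_nonneg)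
    also have "\<dots> \<le> a" using a assms by simp
    finally have r: "c\<^sup>2 * w * \<gamma> / a \<le> 1" using ap by (simp add: power2_eq_square algebra_simps)
    have "c\<^sup>2 / (a\<^sup>2 * \<mu>) * (w * (\<gamma>\<^sup>2 * \<mu> / 6)) = (\<gamma> / (6 * a)) * (c\<^sup>2 * w * \<gamma> / a)"
      using ap assms(3,5) by (simp add: divide_simps power2_eq_square)
    also have "\<dots> \<le> (\<gamma> / (6 * a)) * 1" using r ap assms(5) by (intro mult_left_mono) auto
    finally show ?thesis by simp
  qed
  have "(c\<^sup>2 / (\<gamma> * a^3) + c\<^sup>2 / (a\<^sup>2 * \<mu>)) * ((w - w\<^sup>2) / mm) \<le> (c\<^sup>2 / (\<gamma> * a^3) + c\<^sup>2 / (a\<^sup>2 * \<mu>)) * (w * (\<gamma>\<^sup>2 * \<mu> / 6))"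
    using mult_left_mono[OF 1 C0] .
  also have "\<dots> \<le> \<gamma> / (24 * a) + \<gamma> / (6 * a)" unfolding distrib_right by (rule add_mono[OF i ii])
  finally have X: "(c\<^sup>2 / (\<gamma> * a^3) + c\<^sup>2 / (a\<^sup>2 * \<mu>)) * ((w - w\<^sup>2) / mm) \<le> \<gamma> / (24 * a) + \<gamma> / (6 * a)" .
  have "\<gamma> / (24 * a) + \<gamma> / (6 * a) + \<gamma> / (4 * a) \<le> \<gamma> / 2 * (1 / a)"
    using ap assms(5) by (simp add: field_simps)
  then show ?thesis using X by linarith
qed

lemma weights_sum:
  fixes m :: nat
  assumes "finite A" "sum P A = (1::real)"
  shows "(\<Sum>f\<in>{..<m} \<rightarrow>\<^sub>E A. \<Prod>k<m. P (f k)) = 1"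
  using Epm_prod[OF assms(1), where g="\<lambda>_. P" and m=m] assms(2) by simp

lemma weights_nonneg:
  fixes m :: nat
  assumes "is_dist A P" "f \<in> {..<m} \<rightarrow>\<^sub>E A"
  shows "0 \<le> (\<Prod>k<m. P (f k))"
  using assms unfolding is_dist_def by (intro prod_nonneg) (auto simp: PiE_def Pi_def)

lemma part1:
  fixes Pol :: "('x \<Rightarrow> 'a) set" and P :: "('x \<Rightarrow> 'a) \<Rightarrow> real" and K m :: nat and \<mu> \<gamma> :: real
  assumes fin: "finite Pol" and dist: "is_dist Pol P" and c0: "0 < 1 - real K * \<mu>" and c1: "1 - real K * \<mu> \<le> 1"
    and mu: "\<mu> > 0" and g0: "\<gamma> > 0" and g1: "\<gamma> \<le> 1" and m0: "m > 0" and mbig: "real m \<ge> 6 / (\<gamma>\<^sup>2 * \<mu>)"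
  shows "E_Pm Pol P m (\<lambda>Q. \<bar>inv_prob Pol K \<mu> Q \<pi> x - inv_prob Pol K \<mu> P \<pi> x\<bar>) \<le> \<gamma> / 2 * inv_prob Pol K \<mu> P \<pi> x"
proof -
  define c where "c = 1 - real K * \<mu>"
  define Y where "Y y = (if y x = \<pi> x then 1 else (0::real))" for y :: "'x \<Rightarrow> 'a"
  define w where "w = (\<Sum>y\<in>Pol. P y * Y y)"
  define a where "a = c * w + \<mu>"
  define C where "C = c\<^sup>2 / (\<gamma> * a^3) + c\<^sup>2 / (a\<^sup>2 * \<mu>)"
  have sP: "sum P Pol = 1" using dist unfolding is_dist_def by simp
  have wW: "W Pol P x (\<pi> x) = w" unfolding w_def Y_def by (rule W_sum[OF fin])
  have w0: "w \<ge> 0" using dist_W[OF dist fin] wW by metis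
  have invP: "inv_prob Pol K \<mu> P \<pi> x = 1 / a" unfolding inv_prob_def wW a_def c_def ..
  have bound: "\<bar>inv_prob Pol K \<mu> (emp m f) \<pi> x - inv_prob Pol K \<mu> P \<pi> x\<bar>
      \<le> \<gamma> / (4 * a) + C * ((\<Sum>i<m. Y (f i)) / m - w)\<^sup>2" if f: "f \<in> {..<m} \<rightarrow>\<^sub>E Pol" for f
  proof -
    define v where "v = (\<Sum>i<m. Y (f i)) / m"
    have "W Pol (emp m f) x (\<pi> x) = v" unfolding v_def Y_def using W_emp[OF f fin] by simp
    then have iq: "inv_prob Pol K \<mu> (emp m f) \<pi> x = 1 / (c * v + \<mu>)" unfolding inv_prob_def c_def by simp
    have v0: "v \<ge> 0" unfolding v_def Y_def by (intro divide_nonneg_nonneg sum_nonneg) auto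
    show ?thesis using pw_bound[OF _ mu w0 v0 g0, of c] c0 unfolding iq invP a_def C_def c_def v_def by simp
  qed
  have "E_Pm Pol P m (\<lambda>Q. \<bar>inv_prob Pol K \<mu> Q \<pi> x - inv_prob Pol K \<mu> P \<pi> x\<bar>)
     \<le> (\<Sum>f\<in>{..<m} \<rightarrow>\<^sub>E Pol. (\<Prod>k<m. P (f k)) * (\<gamma> / (4 * a) + C * ((\<Sum>i<m. Y (f i)) / m - w)\<^sup>2))"
    unfolding E_Pm_def by (intro sum_mono mult_left_mono bound weights_nonneg[OF dist])
  also have "\<dots> = \<gamma> / (4 * a) * (\<Sum>f\<in>{..<m} \<rightarrow>\<^sub>E Pol. (\<Prod>k<m. P (f k)))
      + C * (\<Sum>f\<in>{..<m} \<rightarrow>\<^sub>E Pol. (\<Prod>k<m. P (f k)) * ((\<Sum>i<m. Y (f i)) / m - w)\<^sup>2)"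
    by (simp add: distrib_left sum.distrib sum_distrib_left algebra_simps)
  also have "\<dots> = \<gamma> / (4 * a) + C * ((w - w\<^sup>2) / m)"
    unfolding weights_sum[OF fin sP] w_def by (subst Epm_var[OF fin sP m0]) (auto simp: Y_def)
  also have "\<dots> \<le> \<gamma> / 2 * (1 / a)"
    unfolding C_def by (rule arith_final[OF _ _ mu w0 g0 g1 _ mbig]) (use c0 c1 m0 in \<open>auto simp: c_def a_def\<close>)
  finally show ?thesis unfolding invP .
qed

lemma W_nonneg: "finite Pol \<Longrightarrow> \<forall>y\<in>Pol. 0 \<le> Q y \<Longrightarrow> 0 \<le> W Pol Q x a"
  unfolding W_def by (intro sum_nonneg) auto

lemma inv_den:
  fixes Pol :: "('x \<Rightarrow> 'a) set" and Q :: "('x \<Rightarrow> 'a) \<Rightarrow> real" and K :: nat and \<mu> :: real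
  assumes "finite Pol" "\<forall>y\<in>Pol. 0 \<le> Q y" "0 < 1 - real K * \<mu>"
  shows "\<mu> \<le> (1 - real K * \<mu>) * W Pol Q x (\<pi> x) + \<mu>"
proof -
  have W0: "0 \<le> W Pol Q x (\<pi> x)" by (rule W_nonneg[OF assms(1,2)])
  have "0 \<le> (1 - real K * \<mu>) * W Pol Q x (\<pi> x)" using assms(3) W0 by (intro mult_nonneg_nonneg) auto
  then show ?thesis by linarith
qed

lemma inv_pos:
  fixes Pol :: "('x \<Rightarrow> 'a) set" and Q :: "('x \<Rightarrow> 'a) \<Rightarrow> real" and K :: nat and \<mu> :: real
  assumes "finite Pol" "\<forall>y\<in>Pol. 0 \<le> Q y" "0 < 1 - real K * \<mu>" "\<mu> > 0"
  shows "0 < inv_prob Pol K \<mu> Q \<pi> x"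
  unfolding inv_prob_def using inv_den[OF assms(1-3), of x \<pi>] assms(4) by simp

lemma inv_le:
  fixes Pol :: "('x \<Rightarrow> 'a) set" and Q :: "('x \<Rightarrow> 'a) \<Rightarrow> real" and K :: nat and \<mu> :: real
  assumes "finite Pol" "\<forall>y\<in>Pol. 0 \<le> Q y" "0 < 1 - real K * \<mu>" "\<mu> > 0"
  shows "inv_prob Pol K \<mu> Q \<pi> x \<le> 1 / \<mu>"
  unfolding inv_prob_def using inv_den[OF assms(1-3), of x \<pi>] assms(4)
  by (intro divide_left_mono) auto

lemma inv_integrable:
  fixes Pol :: "('x \<Rightarrow> 'a::finite) set" and Q :: "('x \<Rightarrow> 'a) \<Rightarrow> real" and K :: nat and \<mu> :: real and D :: "'x measure"
  assumes "prob_space D" "finite Pol" "\<forall>\<pi>'\<in>Pol. \<pi>' \<in> D \<rightarrow>\<^sub>M count_space UNIV" "\<pi> \<in> Pol"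
    "\<forall>y\<in>Pol. 0 \<le> Q y" "0 < 1 - real K * \<mu>" "\<mu> > 0"
  shows "integrable D (\<lambda>x. inv_prob Pol K \<mu> Q \<pi> x)"
proof -
  interpret prob_space D by fact
  have ind0: "(\<lambda>x. if y x = b then 1 else (0::real)) \<in> borel_measurable D" if "y \<in> Pol" for y and b :: 'a
  proof -
    have yM: "y \<in> D \<rightarrow>\<^sub>M count_space UNIV" using assms(3) that by blast
    have "(\<lambda>a. if a = b then 1 else (0::real)) \<in> count_space UNIV \<rightarrow>\<^sub>M borel" by simp
    from measurable_compose[OF yM this] show ?thesis by simp
  qed
  have ind: "(\<lambda>x. if y x = \<pi> x then 1 else (0::real)) \<in> borel_measurable D" if "y \<in> Pol" for y
  proof -
    have eq: "(\<lambda>x. if y x = \<pi> x then 1 else (0::real)) = (\<lambda>x. \<Sum>b\<in>UNIV. (if y x = b then 1 else 0) * (if \<pi> x = b then 1 else 0))"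
    proof
      fix x
      have "(\<Sum>b\<in>UNIV. (if y x = b then 1 else (0::real)) * (if \<pi> x = b then 1 else 0)) = (\<Sum>b\<in>UNIV. if y x = b then (if \<pi> x = b then 1 else 0) else 0)"
        by (rule sum.cong) auto
      also have "\<dots> = (if \<pi> x = y x then 1 else 0)" by (simp add: sum.delta)
      finally show "(if y x = \<pi> x then 1 else (0::real)) = (\<Sum>b\<in>UNIV. (if y x = b then 1 else 0) * (if \<pi> x = b then 1 else 0))" by auto
    qed
    show ?thesis unfolding eq
      by (intro borel_measurable_sum borel_measurable_times ind0 that assms(4))
  qed
  have m: "(\<lambda>x. inv_prob Pol K \<mu> Q \<pi> x) \<in> borel_measurable D"
    unfolding inv_prob_def W_sum[OF assms(2)]
    by (intro borel_measurable_divide borel_measurable_add borel_measurable_times borel_measurable_sum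
          borel_measurable_const ind)
  show ?thesis
  proof (rule integrable_const_bound[where B="1/\<mu>"])
    show "AE x in D. norm (inv_prob Pol K \<mu> Q \<pi> x) \<le> 1 / \<mu>"
      using inv_pos[OF assms(2,5,6,7), of \<pi>] inv_le[OF assms(2,5,6,7), of \<pi>] by (simp add: less_imp_le)
  qed (rule m)
qed

lemma exists_good:
  fixes p \<Phi> :: "'b \<Rightarrow> real"
  assumes "finite B" "\<forall>f\<in>B. 0 \<le> p f" "sum p B = 1" "(\<Sum>f\<in>B. p f * \<Phi> f) \<le> \<gamma>"
  shows "\<exists>f\<in>B. \<Phi> f \<le> \<gamma>"
proof (rule ccontr)
  assume "\<not> ?thesis"
  then have gt: "\<forall>f\<in>B. \<gamma> < \<Phi> f" by auto
  obtain a where a: "a \<in> B" "p a > 0"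
  proof (rule ccontr)
    assume "\<not> thesis"
    then have "\<forall>f\<in>B. p f \<le> 0" using that by force
    then have "sum p B \<le> 0" by (simp add: sum_nonpos)
    then show False using assms(3) by simp
  qed
  have "(\<Sum>f\<in>B. p f * \<gamma>) < (\<Sum>f\<in>B. p f * \<Phi> f)"
  proof (rule sum_strict_mono_ex1[OF assms(1)])
    show "\<forall>x\<in>B. p x * \<gamma> \<le> p x * \<Phi> x" using gt assms(2) by (auto intro: mult_left_mono less_imp_le)
    show "\<exists>a\<in>B. p a * \<gamma> < p a * \<Phi> a" using a gt by (intro bexI[of _ a]) (auto intro: mult_strict_left_mono)
  qed
  then show False using assms(3,4) by (simp add: sum_distrib_right[symmetric])
qed

lemma emp_nonneg: "0 \<le> emp m f y"
  unfolding emp_def by simp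

lemma div_half:
  fixes X V g :: real
  assumes "X \<le> g * V" "V \<ge> 0" "g \<ge> 0"
  shows "X / V \<le> g"
  using assms by (cases "V = 0") (auto simp: divide_le_eq mult.commute)

lemma invP_ge1:
  fixes Pol :: "('x \<Rightarrow> 'a) set" and P :: "('x \<Rightarrow> 'a) \<Rightarrow> real" and K :: nat and \<mu> :: real
  assumes "finite Pol" "is_dist Pol P" "0 < 1 - real K * \<mu>" "\<mu> > 0" "K \<ge> 1"
  shows "1 \<le> inv_prob Pol K \<mu> P \<pi> x"
proof -
  have W1: "W Pol P x (\<pi> x) \<le> 1" using dist_W[OF assms(2,1)] by blast
  have "(1 - real K * \<mu>) * W Pol P x (\<pi> x) \<le> (1 - real K * \<mu>) * 1"
    using W1 assms(3) by (intro mult_left_mono) auto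
  moreover have "real K * \<mu> \<ge> \<mu>" using assms(4,5) by simp
  then have "(1 - real K * \<mu>) * 1 + \<mu> \<le> 1" by simp
  ultimately have le: "(1 - real K * \<mu>) * W Pol P x (\<pi> x) + \<mu> \<le> 1" by linarith
  have pos: "0 < (1 - real K * \<mu>) * W Pol P x (\<pi> x) + \<mu>"
    using inv_den[OF assms(1) _ assms(3), of P x \<pi>] assms(2,4) unfolding is_dist_def by auto
  show ?thesis unfolding inv_prob_def using le pos by simp
qed

lemma part2:
  fixes Pol :: "('x \<Rightarrow> 'a::finite) set" and P :: "('x \<Rightarrow> 'a) \<Rightarrow> real" and K m t :: nat
    and \<mu> \<gamma> :: real and D :: "'x measure" and xs :: "nat \<Rightarrow> 'x"
  assumes D: "prob_space D" and fin: "finite Pol" and meas: "\<forall>\<pi>'\<in>Pol. \<pi>' \<in> D \<rightarrow>\<^sub>M count_space UNIV"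
    and pi: "\<pi> \<in> Pol" and dist: "is_dist Pol P" and c0: "0 < 1 - real K * \<mu>" and mu: "\<mu> > 0"
    and K1: "K \<ge> 1" and g0: "\<gamma> > 0"
    and p1: "\<And>x. E_Pm Pol P m (\<lambda>Q. \<bar>inv_prob Pol K \<mu> Q \<pi> x - inv_prob Pol K \<mu> P \<pi> x\<bar>)
              \<le> \<gamma> / 2 * inv_prob Pol K \<mu> P \<pi> x"
  shows "\<exists>Q\<in>S Pol m. \<forall>lam::real. lam > 0 \<longrightarrow>
               (V D Pol K \<mu> P \<pi> - V D Pol K \<mu> Q \<pi>)
                 + (1 + lam) * (Vhat xs t Pol K \<mu> Q \<pi> - Vhat xs t Pol K \<mu> P \<pi>)
               \<le> \<gamma> * (V D Pol K \<mu> P \<pi> + (1 + lam) * Vhat xs t Pol K \<mu> P \<pi>)"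
proof -
  interpret prob_space D by (rule D)
  define iQ where "iQ Q x = inv_prob Pol K \<mu> Q \<pi> x" for Q x
  define h where "h Q x = \<bar>iQ Q x - iQ P x\<bar>" for Q x
  define B where "B = {..<m} \<rightarrow>\<^sub>E Pol"
  define wt where "wt f = (\<Prod>k<m. P (f k))" for f :: "nat \<Rightarrow> 'x \<Rightarrow> 'a"
  define VP where "VP = V D Pol K \<mu> P \<pi>"
  define HP where "HP = Vhat xs t Pol K \<mu> P \<pi>"
  define I where "I Q = (\<integral>x. h Q x \<partial>D)" for Q
  define J where "J Q = (1 / real (t - 1)) * (\<Sum>i\<in>{1..<t}. h Q (xs i))" for Q
  define \<Phi> where "\<Phi> f = I (emp m f) / VP + J (emp m f) / HP" for f
  have finB: "finite B" unfolding B_def using fin by (simp add: finite_PiE)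
  have Pnn: "\<forall>y\<in>Pol. 0 \<le> P y" using dist unfolding is_dist_def by simp
  have sP: "sum P Pol = 1" using dist unfolding is_dist_def by simp
  have wt0: "\<forall>f\<in>B. 0 \<le> wt f" unfolding wt_def B_def using weights_nonneg[OF dist] by blast
  have wt1: "sum wt B = 1" unfolding wt_def B_def by (rule weights_sum[OF fin sP])
  have intQ: "integrable D (iQ Q)" if "\<forall>y\<in>Pol. 0 \<le> Q y" for Q
    unfolding iQ_def using inv_integrable[OF D fin meas pi that c0 mu] by simp
  have intE: "integrable D (iQ (emp m f))" for f by (rule intQ) (simp add: emp_nonneg)
  have intP: "integrable D (iQ P)" by (rule intQ[OF Pnn])
  have inth: "integrable D (h (emp m f))" for f
    unfolding h_def using intE intP by auto
  have iP1: "1 \<le> iQ P x" for x unfolding iQ_def by (rule invP_ge1[OF fin dist c0 mu K1])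
  have VP1: "1 \<le> VP"
  proof -
    have "(\<integral>x. 1 \<partial>D) \<le> (\<integral>x. iQ P x \<partial>D)" by (rule integral_mono[OF _ intP]) (auto simp: iP1)
    then show ?thesis unfolding VP_def V_def iQ_def by (simp add: prob_space)
  qed
  have HP0: "0 \<le> HP" unfolding HP_def Vhat_def
    using iP1 unfolding iQ_def by (intro mult_nonneg_nonneg sum_nonneg) (auto intro: order_trans[OF zero_le_one])
  have EI: "(\<Sum>f\<in>B. wt f * I (emp m f)) \<le> \<gamma> / 2 * VP"
  proof -
    have "(\<integral>x. (\<Sum>f\<in>B. wt f * h (emp m f) x) \<partial>D) = (\<Sum>f\<in>B. \<integral>x. wt f * h (emp m f) x \<partial>D)"
      using Bochner_Integration.integral_sum[where I=B and M=D and f="\<lambda>f x. wt f * h (emp m f) x"] inth by simp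
    then have "(\<Sum>f\<in>B. wt f * I (emp m f)) = (\<integral>x. (\<Sum>f\<in>B. wt f * h (emp m f) x) \<partial>D)"
      unfolding I_def by simp
    also have "\<dots> \<le> (\<integral>x. \<gamma> / 2 * iQ P x \<partial>D)"
    proof (rule integral_mono)
      show "integrable D (\<lambda>x. \<Sum>f\<in>B. wt f * h (emp m f) x)" using inth by auto
      show "integrable D (\<lambda>x. \<gamma> / 2 * iQ P x)" using intP by auto
      fix x
      show "(\<Sum>f\<in>B. wt f * h (emp m f) x) \<le> \<gamma> / 2 * iQ P x"
        using p1[of x] unfolding E_Pm_def h_def iQ_def wt_def B_def .
    qed
    also have "\<dots> = \<gamma> / 2 * VP" unfolding VP_def V_def iQ_def by simp
    finally show ?thesis .
  qed
  have EJ: "(\<Sum>f\<in>B. wt f * J (emp m f)) \<le> \<gamma> / 2 * HP"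
  proof -
    have "(\<Sum>f\<in>B. wt f * J (emp m f)) = (1 / real (t - 1)) * (\<Sum>i\<in>{1..<t}. \<Sum>f\<in>B. wt f * h (emp m f) (xs i))"
      unfolding J_def by (simp add: sum_distrib_left sum.swap[of _ B] algebra_simps)
    also have "\<dots> \<le> (1 / real (t - 1)) * (\<Sum>i\<in>{1..<t}. \<gamma> / 2 * iQ P (xs i))"
    proof (intro mult_left_mono sum_mono)
      fix i
      show "(\<Sum>f\<in>B. wt f * h (emp m f) (xs i)) \<le> \<gamma> / 2 * iQ P (xs i)"
        using p1[of "xs i"] unfolding E_Pm_def h_def iQ_def wt_def B_def .
    qed simp
    also have "\<dots> = \<gamma> / 2 * HP" unfolding HP_def Vhat_def iQ_def by (metis (no_types) sum_distrib_left mult.left_commute)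
    finally show ?thesis .
  qed
  have "(\<Sum>f\<in>B. wt f * \<Phi> f) = (\<Sum>f\<in>B. wt f * I (emp m f)) / VP + (\<Sum>f\<in>B. wt f * J (emp m f)) / HP"
    unfolding \<Phi>_def by (simp add: distrib_left sum.distrib sum_divide_distrib)
  also have "\<dots> \<le> \<gamma> / 2 + \<gamma> / 2"
    using div_half[OF EI _ _] div_half[OF EJ _ _] VP1 HP0 g0 by (intro add_mono) auto
  finally have "(\<Sum>f\<in>B. wt f * \<Phi> f) \<le> \<gamma>" by simp
  from exists_good[OF finB wt0 wt1 this] obtain f where f: "f \<in> B" "\<Phi> f \<le> \<gamma>" by blast
  define Q where "Q = emp m f"
  have QS: "Q \<in> S Pol m" unfolding Q_def S_def using f(1) B_def by blast
  have I0: "0 \<le> I Q" unfolding I_def h_def by simp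
  have J0: "0 \<le> J Q" unfolding J_def h_def by (intro mult_nonneg_nonneg sum_nonneg) auto
  have IV: "I Q / VP \<le> \<gamma>" and JH: "J Q / HP \<le> \<gamma>"
    using f(2) I0 J0 VP1 HP0 unfolding \<Phi>_def Q_def[symmetric]
    by (smt (verit) divide_nonneg_nonneg)+
  have A: "VP - V D Pol K \<mu> Q \<pi> \<le> \<gamma> * VP"
  proof -
    have "VP - V D Pol K \<mu> Q \<pi> = (\<integral>x. iQ P x - iQ Q x \<partial>D)"
      unfolding VP_def V_def iQ_def Q_def using intP intE unfolding iQ_def by simp
    also have "\<dots> \<le> I Q" unfolding I_def h_def
      using intP intE unfolding Q_def by (intro integral_mono) auto
    also have "\<dots> \<le> \<gamma> * VP" using IV VP1 by (simp add: divide_le_eq)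
    finally show ?thesis .
  qed
  have Bd: "Vhat xs t Pol K \<mu> Q \<pi> - HP \<le> \<gamma> * HP"
  proof -
    have "Vhat xs t Pol K \<mu> Q \<pi> - HP = (1 / real (t - 1)) * (\<Sum>i\<in>{1..<t}. iQ Q (xs i) - iQ P (xs i))"
      unfolding HP_def Vhat_def iQ_def by (simp add: sum_subtractf algebra_simps)
    also have "\<dots> \<le> J Q" unfolding J_def h_def by (intro mult_left_mono sum_mono) auto
    also have "\<dots> \<le> \<gamma> * HP"
    proof (cases "t \<ge> 2")
      case True
      have "HP \<ge> (1 / real (t - 1)) * (\<Sum>i\<in>{1..<t}. 1)" unfolding HP_def Vhat_def
        using iP1 unfolding iQ_def by (intro mult_left_mono sum_mono) auto
      moreover have "(1 / real (t - 1)) * (\<Sum>i\<in>{1..<t}. (1::real)) > 0" using True by simp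
      ultimately have "HP > 0" by (meson less_le_trans)
      then show ?thesis using JH by (simp add: divide_le_eq)
    next
      case False
      then have "t - 1 = 0" by simp
      then show ?thesis unfolding J_def using HP0 g0 by simp
    qed
    finally show ?thesis .
  qed
  show ?thesis
  proof (intro bexI[OF _ QS] allI impI)
    fix lam :: real assume "lam > 0"
    have "(1 + lam) * (Vhat xs t Pol K \<mu> Q \<pi> - HP) \<le> (1 + lam) * (\<gamma> * HP)"
      using Bd \<open>lam > 0\<close> by (intro mult_left_mono) auto
    then show "(V D Pol K \<mu> P \<pi> - V D Pol K \<mu> Q \<pi>) + (1 + lam) * (Vhat xs t Pol K \<mu> Q \<pi> - Vhat xs t Pol K \<mu> P \<pi>)
               \<le> \<gamma> * (V D Pol K \<mu> P \<pi> + (1 + lam) * Vhat xs t Pol K \<mu> P \<pi>)"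
      using A unfolding VP_def HP_def by (simp add: algebra_simps)
  qed
qed

theorem lemma8:
  fixes Pol :: "('x \<Rightarrow> 'a::finite) set" and D :: "'x measure"
    and \<delta> \<gamma> :: real and t :: nat and xs :: "nat \<Rightarrow> 'x"
  assumes "finite Pol" and "Pol \<noteq> {}"
    and "prob_space D"
    and "\<forall>\<pi>\<in>Pol. \<pi> \<in> D \<rightarrow>\<^sub>M count_space UNIV"
    and "0 < \<delta>" and "\<delta> < 1" and "1 \<le> t"
    and "0 < \<gamma>" and "\<gamma> \<le> 1"
  defines "K \<equiv> CARD('a)" and "N \<equiv> card Pol"
  defines "\<mu> \<equiv> mu_t K N \<delta> t"
  defines "m \<equiv> nat \<lceil>6 / (\<gamma>\<^sup>2 * \<mu>)\<rceil>"
  shows "(\<forall>x P \<pi>. is_dist Pol P \<and> \<pi> \<in> Pol \<longrightarrow>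
            E_Pm Pol P m (\<lambda>Q. \<bar>inv_prob Pol K \<mu> Q \<pi> x - inv_prob Pol K \<mu> P \<pi> x\<bar>)
              \<le> \<gamma> * inv_prob Pol K \<mu> P \<pi> x)
       \<and> (\<forall>P \<pi>. is_dist Pol P \<and> \<pi> \<in> Pol \<longrightarrow>
            (\<exists>Q\<in>S Pol m. \<forall>lam::real. lam > 0 \<longrightarrow>
               (V D Pol K \<mu> P \<pi> - V D Pol K \<mu> Q \<pi>)
                 + (1 + lam) * (Vhat xs t Pol K \<mu> Q \<pi> - Vhat xs t Pol K \<mu> P \<pi>)
               \<le> \<gamma> * (V D Pol K \<mu> P \<pi> + (1 + lam) * Vhat xs t Pol K \<mu> P \<pi>)))"
proof -
  have K1: "K \<ge> 1" unfolding K_def using zero_less_card_finite[where 'a='a] by linarith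
  have N1: "N \<ge> 1" unfolding N_def using assms(1,2) card_gt_0_iff[of Pol] by linarith
  have NT: "real N * real t \<ge> 1" using N1 assms(7) mult_mono[of 1 "real N" 1 "real t"] by simp
  have "real N * real t / \<delta> > 1" using NT assms(5,6) by (simp add: less_divide_eq)
  then have Cpos: "C_t N \<delta> t > 0" unfolding C_t_def by simp
  have Kpos: "real K > 0" using K1 by simp
  have tpos: "real t > 0" using assms(7) by simp
  have mu: "\<mu> > 0" unfolding \<mu>_def mu_t_def using Cpos Kpos tpos by simp
  have muK: "\<mu> \<le> 1 / (2 * real K)" unfolding \<mu>_def mu_t_def by simp
  then have "real K * \<mu> \<le> 1 / 2" using Kpos by (simp add: field_simps)
  then have c0: "0 < 1 - real K * \<mu>" by linarith
  have c1: "1 - real K * \<mu> \<le> 1" using Kpos mu by simp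
  have X: "6 / (\<gamma>\<^sup>2 * \<mu>) > 0" using mu assms(8) by simp
  have ce: "of_int \<lceil>6 / (\<gamma>\<^sup>2 * \<mu>)\<rceil> \<ge> 6 / (\<gamma>\<^sup>2 * \<mu>)" by (rule le_of_int_ceiling)
  have cnn: "\<lceil>6 / (\<gamma>\<^sup>2 * \<mu>)\<rceil> \<ge> 0" using X by (simp only: zero_le_ceiling)
  have "real m = of_int \<lceil>6 / (\<gamma>\<^sup>2 * \<mu>)\<rceil>" unfolding m_def using cnn by simp
  then have mbig: "real m \<ge> 6 / (\<gamma>\<^sup>2 * \<mu>)" using ce by simp
  then have "real m > 0" using X by linarith
  then have m0: "m > 0" by simp
  have p1: "E_Pm Pol P m (\<lambda>Q. \<bar>inv_prob Pol K \<mu> Q \<pi> x - inv_prob Pol K \<mu> P \<pi> x\<bar>)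
              \<le> \<gamma> / 2 * inv_prob Pol K \<mu> P \<pi> x" if "is_dist Pol P" for P \<pi> x
    by (rule part1[OF assms(1) that c0 c1 mu assms(8,9) m0 mbig])
  show ?thesis
  proof (intro conjI allI impI; elim conjE)
    fix x P \<pi> assume d: "is_dist Pol P" and "\<pi> \<in> Pol"
    have "0 < inv_prob Pol K \<mu> P \<pi> x"
      using inv_pos[OF assms(1) _ c0 mu] d unfolding is_dist_def by blast
    then have "\<gamma> / 2 * inv_prob Pol K \<mu> P \<pi> x \<le> \<gamma> * inv_prob Pol K \<mu> P \<pi> x" using assms(8) by simp
    then show "E_Pm Pol P m (\<lambda>Q. \<bar>inv_prob Pol K \<mu> Q \<pi> x - inv_prob Pol K \<mu> P \<pi> x\<bar>) \<le> \<gamma> * inv_prob Pol K \<mu> P \<pi> x"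
      using p1[OF d, of \<pi> x] by linarith
  next
    fix P \<pi> assume d: "is_dist Pol P" and pi: "\<pi> \<in> Pol"
    show "\<exists>Q\<in>S Pol m. \<forall>lam::real. lam > 0 \<longrightarrow>
               (V D Pol K \<mu> P \<pi> - V D Pol K \<mu> Q \<pi>)
                 + (1 + lam) * (Vhat xs t Pol K \<mu> Q \<pi> - Vhat xs t Pol K \<mu> P \<pi>)
               \<le> \<gamma> * (V D Pol K \<mu> P \<pi> + (1 + lam) * Vhat xs t Pol K \<mu> P \<pi>)"
      by (rule part2[OF assms(3,1,4) pi d c0 mu K1 assms(8) p1[OF d]])
  qed
qed

end
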